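(* Let $A$ and $B$ be rings, $f: A\to B$ a ring homomorphism and $J$ a proper ideal of $B$. Then: (1) If $A\bowtie^{f}J$ is a weak Armendariz ring, then $A$ is a weak Armendariz ring. (2) If $A$ and $f(A)+J$ are weak Armendariz rings, then $A\bowtie^{f}J$ is a weak Armendariz ring.
   Context: All rings are associative with identity (not necessarily commutative), ring homomorphisms are unital, and ideals are two-sided. $\mathrm{nil}(R)$ denotes the set of nilpotent elements of a ring $R$. For a ring homomorphism $f:A\to B$ and an ideal $J$ of $B$, the amalgamation is the subring $A\bowtie^{f}J=\{(a,f(a)+j)\mid a\in A,\ j\in J\}$ of $A\times B$; $f(A)+J=\{f(a)+j: a\in A, j\in J\}$ is a subring of $B$. A ring $R$ is weak Armendariz if whenever $p(x)=\sum_{i=0}^n a_ix^i$ and $q(x)=\sum_{j=0}^m b_jx^j$ in $R[x]$ satisfy $p(x)q(x)=0$, then $a_ib_j\in\mathrm{nil}(R)$ for all $i,j$. *)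

theory Defs
  imports "HOL-Algebra.Algebra"
begin

definition nil_elems :: "('a, 'b) ring_scheme \<Rightarrow> 'a set" where
  "nil_elems R = {x \<in> carrier R. \<exists>n::nat. x [^]\<^bsub>R\<^esub> n = \<zero>\<^bsub>R\<^esub>}"

definition weak_armendariz :: "('a, 'b) ring_scheme \<Rightarrow> bool" where
  "weak_armendariz R \<longleftrightarrow>
     (\<forall>p \<in> carrier (UP R). \<forall>q \<in> carrier (UP R).
        p \<otimes>\<^bsub>UP R\<^esub> q = \<zero>\<^bsub>UP R\<^esub> \<longrightarrow> (\<forall>i j. p i \<otimes>\<^bsub>R\<^esub> q j \<in> nil_elems R))"

definition amalgamation ::
  "('a, 'c) ring_scheme \<Rightarrow> ('b, 'd) ring_scheme \<Rightarrow> ('a \<Rightarrow> 'b) \<Rightarrow> 'b set \<Rightarrow> ('a \<times> 'b) ring" where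
  "amalgamation A B f J =
     (RDirProd A B)\<lparr>carrier := {(a, f a \<oplus>\<^bsub>B\<^esub> j) | a j. a \<in> carrier A \<and> j \<in> J}\<rparr>"

definition image_plus_ideal ::
  "('a, 'c) ring_scheme \<Rightarrow> ('b, 'd) ring_scheme \<Rightarrow> ('a \<Rightarrow> 'b) \<Rightarrow> 'b set \<Rightarrow> ('b, 'd) ring_scheme" where
  "image_plus_ideal A B f J =
     B\<lparr>carrier := {f a \<oplus>\<^bsub>B\<^esub> j | a j. a \<in> carrier A \<and> j \<in> J}\<rparr>"

end

theory Submission
  imports Defs
begin


lemma UP_map:
  assumes R: "ring R" and S: "ring S" and h: "h \<in> ring_hom R S"
    and p: "p \<in> carrier (UP R)"
  shows "h \<circ> p \<in> carrier (UP S)"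
proof -
  interpret ring_hom_ring R S h using R S h by (rule ring_hom_ringI2)
  from p obtain n where "bound \<zero>\<^bsub>R\<^esub> n p" "\<forall>i. p i \<in> carrier R"
    by (auto simp: UP_def up_def Pi_def)
  then show ?thesis
    by (auto simp: UP_def up_def Pi_def bound_def intro!: exI[of _ n])
qed

lemma UP_map_mult:
  assumes R: "ring R" and S: "ring S" and h: "h \<in> ring_hom R S"
    and p: "p \<in> carrier (UP R)" and q: "q \<in> carrier (UP R)"
  shows "(h \<circ> p) \<otimes>\<^bsub>UP S\<^esub> (h \<circ> q) = h \<circ> (p \<otimes>\<^bsub>UP R\<^esub> q)"
proof -
  interpret ring_hom_ring R S h using R S h by (rule ring_hom_ringI2)
  have hp: "h \<circ> p \<in> up S" and hq: "h \<circ> q \<in> up S"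
    using UP_map[OF R S h p] UP_map[OF R S h q] by (simp_all add: UP_def)
  have pc: "\<And>i. p i \<in> carrier R" and qc: "\<And>i. q i \<in> carrier R"
    using p q by (auto simp: UP_def up_def Pi_def)
  show ?thesis
  proof
    fix n
    have "h (\<Oplus>\<^bsub>R\<^esub>i \<in> {..n}. p i \<otimes>\<^bsub>R\<^esub> q (n-i))
        = (\<Oplus>\<^bsub>S\<^esub>i \<in> {..n}. h (p i) \<otimes>\<^bsub>S\<^esub> h (q (n-i)))"
      using pc qc by (simp add: comp_def Pi_def)
    then show "((h \<circ> p) \<otimes>\<^bsub>UP S\<^esub> (h \<circ> q)) n = (h \<circ> (p \<otimes>\<^bsub>UP R\<^esub> q)) n"
      using hp hq p q by (simp add: UP_def)
  qed
qed

lemma UP_map_zero: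
  assumes R: "ring R" and S: "ring S" and h: "h \<in> ring_hom R S"
  shows "h \<circ> \<zero>\<^bsub>UP R\<^esub> = \<zero>\<^bsub>UP S\<^esub>"
proof -
  interpret ring_hom_ring R S h using R S h by (rule ring_hom_ringI2)
  show ?thesis by (auto simp: UP_def)
qed



lemma RD_ops:
  "(a, b) \<otimes>\<^bsub>RDirProd R S\<^esub> (c, d) = (a \<otimes>\<^bsub>R\<^esub> c, b \<otimes>\<^bsub>S\<^esub> d)"
  "(a, b) \<oplus>\<^bsub>RDirProd R S\<^esub> (c, d) = (a \<oplus>\<^bsub>R\<^esub> c, b \<oplus>\<^bsub>S\<^esub> d)"
  "\<one>\<^bsub>RDirProd R S\<^esub> = (\<one>\<^bsub>R\<^esub>, \<one>\<^bsub>S\<^esub>)"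
  "\<zero>\<^bsub>RDirProd R S\<^esub> = (\<zero>\<^bsub>R\<^esub>, \<zero>\<^bsub>S\<^esub>)"
  by (simp_all add: RDirProd_def DirProd_def monoid.defs)

lemma amal_subring:
  assumes A: "ring A" and B: "ring B" and f: "f \<in> ring_hom A B" and J: "ideal J B"
  shows "subring {(a, f a \<oplus>\<^bsub>B\<^esub> j) | a j. a \<in> carrier A \<and> j \<in> J} (RDirProd A B)"
proof -
  interpret A: ring A by fact
  interpret B: ring B by fact
  interpret P: ring "RDirProd A B" using RDirProd_ring[OF A B] .
  interpret J: ideal J B by fact
  interpret h: ring_hom_ring A B f using A B f by (rule ring_hom_ringI2)
  let ?C = "{(a, f a \<oplus>\<^bsub>B\<^esub> j) | a j. a \<in> carrier A \<and> j \<in> J}"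
  have Jc: "\<And>j. j \<in> J \<Longrightarrow> j \<in> carrier B" using J.a_subset by blast
  have neg: "\<And>a b. a \<in> carrier A \<Longrightarrow> b \<in> carrier B \<Longrightarrow>
     \<ominus>\<^bsub>RDirProd A B\<^esub> (a, b) = (\<ominus>\<^bsub>A\<^esub> a, \<ominus>\<^bsub>B\<^esub> b)"
    by (rule P.minus_equality) (simp_all add: RD_ops RDirProd_carrier A.l_neg B.l_neg)
  show ?thesis
  proof (rule P.subringI)
    show "?C \<subseteq> carrier (RDirProd A B)" using Jc by (auto simp: RDirProd_carrier)
    show "\<one>\<^bsub>RDirProd A B\<^esub> \<in> ?C"
      by (simp add: RD_ops) (metis A.one_closed B.one_closed B.r_zero J.additive_subgroup_axioms additive_subgroup.zero_closed h.hom_one)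
  next
    fix x assume "x \<in> ?C"
    then obtain a j where x: "x = (a, f a \<oplus>\<^bsub>B\<^esub> j)" "a \<in> carrier A" "j \<in> J" by blast
    have "\<ominus>\<^bsub>B\<^esub> (f a \<oplus>\<^bsub>B\<^esub> j) = f (\<ominus>\<^bsub>A\<^esub> a) \<oplus>\<^bsub>B\<^esub> \<ominus>\<^bsub>B\<^esub> j"
      using x Jc by (simp add: B.minus_add)
    then show "\<ominus>\<^bsub>RDirProd A B\<^esub> x \<in> ?C" using x Jc
      by (auto simp: neg intro!: exI[of _ "\<ominus>\<^bsub>A\<^esub> a"] exI[of _ "\<ominus>\<^bsub>B\<^esub> j"] J.a_inv_closed)
  next
    fix x y assume "x \<in> ?C" "y \<in> ?C"
    then obtain a j a' j' where x: "x = (a, f a \<oplus>\<^bsub>B\<^esub> j)" "a \<in> carrier A" "j \<in> J"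
      and y: "y = (a', f a' \<oplus>\<^bsub>B\<^esub> j')" "a' \<in> carrier A" "j' \<in> J" by blast
    have jc: "j \<in> carrier B" "j' \<in> carrier B" using x y Jc by auto
    have fa: "f a \<in> carrier B" "f a' \<in> carrier B" using x y by auto
    have e1: "(f a \<oplus>\<^bsub>B\<^esub> j) \<oplus>\<^bsub>B\<^esub> (f a' \<oplus>\<^bsub>B\<^esub> j') = f (a \<oplus>\<^bsub>A\<^esub> a') \<oplus>\<^bsub>B\<^esub> (j \<oplus>\<^bsub>B\<^esub> j')"
      using x y jc fa by (simp add: B.a_ac)
    have e2: "(f a \<oplus>\<^bsub>B\<^esub> j) \<otimes>\<^bsub>B\<^esub> (f a' \<oplus>\<^bsub>B\<^esub> j') = f (a \<otimes>\<^bsub>A\<^esub> a') \<oplus>\<^bsub>B\<^esub> ((f a \<otimes>\<^bsub>B\<^esub> j' \<oplus>\<^bsub>B\<^esub> j \<otimes>\<^bsub>B\<^esub> f a') \<oplus>\<^bsub>B\<^esub> j \<otimes>\<^bsub>B\<^esub> j')"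
      using x y jc fa by (simp add: B.l_distr B.r_distr B.a_ac)
    have jj: "(f a \<otimes>\<^bsub>B\<^esub> j' \<oplus>\<^bsub>B\<^esub> j \<otimes>\<^bsub>B\<^esub> f a') \<oplus>\<^bsub>B\<^esub> j \<otimes>\<^bsub>B\<^esub> j' \<in> J"
      using x y jc fa by (intro J.a_closed J.I_l_closed J.I_r_closed) auto
    show "x \<otimes>\<^bsub>RDirProd A B\<^esub> y \<in> ?C" using x y e2 jj by (auto simp: RD_ops)
    show "x \<oplus>\<^bsub>RDirProd A B\<^esub> y \<in> ?C" using x y e1 by (auto simp: RD_ops intro!: J.a_closed)
  qed
qed


lemma RD_pow: "x [^]\<^bsub>RDirProd R S\<^esub> (n::nat) = (fst x [^]\<^bsub>R\<^esub> n, snd x [^]\<^bsub>S\<^esub> n)"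
  by (induct n) (simp_all add: RD_ops, metis RD_ops(1) prod.collapse)

lemma pow_upd: "x [^]\<^bsub>M\<lparr>carrier := H\<rparr>\<^esub> (n::nat) = x [^]\<^bsub>M\<^esub> n"
  by (simp add: nat_pow_def)

lemma nil_hom:
  assumes R: "ring R" and S: "ring S" and h: "h \<in> ring_hom R S"
    and x: "x \<in> nil_elems R"
  shows "h x \<in> nil_elems S"
proof -
  interpret ring_hom_ring R S h using R S h by (rule ring_hom_ringI2)
  from x obtain n where xc: "x \<in> carrier R" and n: "x [^]\<^bsub>R\<^esub> (n::nat) = \<zero>\<^bsub>R\<^esub>"
    by (auto simp: nil_elems_def)
  have "h x [^]\<^bsub>S\<^esub> n = \<zero>\<^bsub>S\<^esub>" using hom_nat_pow[OF xc, of n] n by simp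
  then show ?thesis using xc by (auto simp: nil_elems_def)
qed

theorem theorem4p1:
  fixes A :: "('a, 'c) ring_scheme" and B :: "('b, 'd) ring_scheme"
    and f :: "'a \<Rightarrow> 'b" and J :: "'b set"
  assumes "ring A" and "ring B" and "f \<in> ring_hom A B"
    and "ideal J B" and "J \<noteq> carrier B"
  shows "(weak_armendariz (amalgamation A B f J) \<longrightarrow> weak_armendariz A)
    \<and> (weak_armendariz A \<and> weak_armendariz (image_plus_ideal A B f J)
         \<longrightarrow> weak_armendariz (amalgamation A B f J))"
proof -
  note A = assms(1) and B = assms(2) and f = assms(3) and J = assms(4)
  interpret A: ring A by fact
  interpret B: ring B by fact
  interpret P: ring "RDirProd A B" using RDirProd_ring[OF A B] .
  interpret J: ideal J B by fact
  interpret h: ring_hom_ring A B f using A B f by (rule ring_hom_ringI2)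
  let ?C = "{(a, f a \<oplus>\<^bsub>B\<^esub> j) | a j. a \<in> carrier A \<and> j \<in> J}"
  let ?AM = "amalgamation A B f J"
  let ?IP = "image_plus_ideal A B f J"
  have Jc: "\<And>j. j \<in> J \<Longrightarrow> j \<in> carrier B" using J.a_subset by blast
  have AMring: "ring ?AM"
    unfolding amalgamation_def by (rule P.subring_is_ring[OF amal_subring[OF A B f J]])
  have cAM: "carrier ?AM = ?C" by (simp add: amalgamation_def)
  have sndP: "snd \<in> ring_hom (RDirProd A B) B"
    by (rule ring_hom_memI) (auto simp: RDirProd_carrier RD_ops)
  have img: "snd ` ?C = {f a \<oplus>\<^bsub>B\<^esub> j | a j. a \<in> carrier A \<and> j \<in> J}" by force
  have IPring: "ring ?IP"
  proof -
    interpret s: ring_hom_ring "RDirProd A B" B snd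
      using RDirProd_ring[OF A B] B sndP by (rule ring_hom_ringI2)
    show ?thesis unfolding image_plus_ideal_def
      using B.subring_is_ring[OF s.img_is_subring[OF amal_subring[OF A B f J]]] img by simp
  qed
  have fst_hom: "fst \<in> ring_hom ?AM A"
    by (rule ring_hom_memI) (auto simp: amalgamation_def RD_ops)
  have snd_hom: "snd \<in> ring_hom ?AM ?IP"
    by (rule ring_hom_memI) (auto simp: amalgamation_def image_plus_ideal_def RD_ops, blast)
  have g_hom: "(\<lambda>a. (a, f a)) \<in> ring_hom A ?AM"
  proof (rule ring_hom_memI)
    fix x assume "x \<in> carrier A"
    then show "(x, f x) \<in> carrier ?AM" unfolding cAM
      by (auto intro!: exI[of _ x] exI[of _ "\<zero>\<^bsub>B\<^esub>"] J.additive_subgroup_axioms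
               additive_subgroup.zero_closed)
  qed (auto simp: amalgamation_def RD_ops)
  show ?thesis
  proof (intro conjI impI)
    assume WA: "weak_armendariz ?AM"
    show "weak_armendariz A" unfolding weak_armendariz_def
    proof (intro ballI impI allI)
      fix p q i j
      assume p: "p \<in> carrier (UP A)" and q: "q \<in> carrier (UP A)"
        and pq: "p \<otimes>\<^bsub>UP A\<^esub> q = \<zero>\<^bsub>UP A\<^esub>"
      let ?g = "\<lambda>a. (a, f a)"
      have P: "?g \<circ> p \<in> carrier (UP ?AM)" and Q: "?g \<circ> q \<in> carrier (UP ?AM)"
        using UP_map[OF A AMring g_hom] p q by auto
      have "(?g \<circ> p) \<otimes>\<^bsub>UP ?AM\<^esub> (?g \<circ> q) = \<zero>\<^bsub>UP ?AM\<^esub>"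
        using UP_map_mult[OF A AMring g_hom p q] pq UP_map_zero[OF A AMring g_hom] by simp
      then have "(?g \<circ> p) i \<otimes>\<^bsub>?AM\<^esub> (?g \<circ> q) j \<in> nil_elems ?AM"
        using WA P Q unfolding weak_armendariz_def by blast
      then have "fst ((?g \<circ> p) i \<otimes>\<^bsub>?AM\<^esub> (?g \<circ> q) j) \<in> nil_elems A"
        by (rule nil_hom[OF AMring A fst_hom])
      then show "p i \<otimes>\<^bsub>A\<^esub> q j \<in> nil_elems A"
        by (simp add: amalgamation_def RD_ops)
    qed
  next
    assume "weak_armendariz A \<and> weak_armendariz ?IP"
    then have WA: "weak_armendariz A" and WI: "weak_armendariz ?IP" by auto
    show "weak_armendariz ?AM" unfolding weak_armendariz_def
    proof (intro ballI impI allI)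
      fix p q i j
      assume p: "p \<in> carrier (UP ?AM)" and q: "q \<in> carrier (UP ?AM)"
        and pq: "p \<otimes>\<^bsub>UP ?AM\<^esub> q = \<zero>\<^bsub>UP ?AM\<^esub>"
      have pc: "p i \<in> carrier ?AM" "q j \<in> carrier ?AM"
        using p q by (auto simp: UP_def up_def Pi_def)
      have xc: "p i \<otimes>\<^bsub>?AM\<^esub> q j \<in> carrier ?AM"
        using pc ring.ring_simprules(5)[OF AMring] by blast
      have "(fst \<circ> p) i \<otimes>\<^bsub>A\<^esub> (fst \<circ> q) j \<in> nil_elems A"
      proof -
        have "(fst \<circ> p) \<otimes>\<^bsub>UP A\<^esub> (fst \<circ> q) = \<zero>\<^bsub>UP A\<^esub>"
          using UP_map_mult[OF AMring A fst_hom p q] pq UP_map_zero[OF AMring A fst_hom] by simp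
        then show ?thesis using WA UP_map[OF AMring A fst_hom] p q
          unfolding weak_armendariz_def by blast
      qed
      then have n1: "fst (p i \<otimes>\<^bsub>?AM\<^esub> q j) \<in> nil_elems A"
        using fst_hom pc by (simp add: ring_hom_mult)
      have "(snd \<circ> p) i \<otimes>\<^bsub>?IP\<^esub> (snd \<circ> q) j \<in> nil_elems ?IP"
      proof -
        have "(snd \<circ> p) \<otimes>\<^bsub>UP ?IP\<^esub> (snd \<circ> q) = \<zero>\<^bsub>UP ?IP\<^esub>"
          using UP_map_mult[OF AMring IPring snd_hom p q] pq UP_map_zero[OF AMring IPring snd_hom] by simp
        then show ?thesis using WI UP_map[OF AMring IPring snd_hom] p q
          unfolding weak_armendariz_def by blast
      qed
      then have n2: "snd (p i \<otimes>\<^bsub>?AM\<^esub> q j) \<in> nil_elems ?IP"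
        using snd_hom pc by (simp add: ring_hom_mult)
      define x where "x = p i \<otimes>\<^bsub>?AM\<^esub> q j"
      from n1 obtain n where n: "fst x [^]\<^bsub>A\<^esub> (n::nat) = \<zero>\<^bsub>A\<^esub>" and fc: "fst x \<in> carrier A"
        by (auto simp: nil_elems_def x_def)
      from n2 obtain m where m: "snd x [^]\<^bsub>B\<^esub> (m::nat) = \<zero>\<^bsub>B\<^esub>" and sc: "snd x \<in> carrier B"
        by (auto simp: nil_elems_def x_def image_plus_ideal_def pow_upd Jc)
      have "fst x [^]\<^bsub>A\<^esub> (n + m) = \<zero>\<^bsub>A\<^esub>"
        using fc n by (simp add: A.nat_pow_mult[symmetric])
      moreover have "snd x [^]\<^bsub>B\<^esub> (n + m) = \<zero>\<^bsub>B\<^esub>"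
        using sc m by (simp add: B.nat_pow_mult[symmetric])
      ultimately have "x [^]\<^bsub>?AM\<^esub> (n + m) = \<zero>\<^bsub>?AM\<^esub>"
        by (simp add: amalgamation_def pow_upd RD_pow RD_ops)
      then show "p i \<otimes>\<^bsub>?AM\<^esub> q j \<in> nil_elems ?AM"
        using xc by (auto simp: nil_elems_def x_def)
    qed
  qed
qed

end
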